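(* Let $\Gamma$ be a commutative Noetherian ring, $M$ a nonzero $\Gamma$-module and $i$ a nonlimit ordinal. The following assertions are equivalent: (1) $t_i(M)=M$ but $t_{i-1}(M)=0$; (2) both of the following hold: (a) for every $x\in M$ there are prime ideals $\mathbf p_1,\dots,\mathbf p_r$ of coheight exactly $i$ and integers $n_1,\dots,n_r>0$ such that $\mathbf p_1^{n_1}\cdots\mathbf p_r^{n_r}x=0$; (b) if $\mathbf p$ is a prime ideal of coheight $<i$ and $x\in M$ satisfies $\mathbf p x=0$, then $x=0$; (3) every prime ideal in $\operatorname{Ass}(M)$ has coheight exactly $i$.
   Context: Define subsets $Z_j\subseteq\operatorname{Spec}\Gamma$ for ordinals $j$: $Z_0=\operatorname{Specm}\Gamma$ (maximal ideals); for a limit ordinal $j>0$, $Z_j=\bigcup_{k<j}Z_k$; for a successor ordinal $j$, $Z_j=Z_{j-1}\cup\operatorname{Max}(\operatorname{Spec}\Gamma\setminus Z_{j-1})$, where $\operatorname{Max}$ denotes inclusion-maximal elements. The coheight $\operatorname{cht}(\mathbf p)$ of a prime $\mathbf p$ is the least ordinal $j$ with $\mathbf p\in Z_j$. Each $Z_j$ is closed under specialization; $\mathcal T_j$ is the class of $\Gamma$-modules $T$ with $\operatorname{Supp}(T)=\{\mathbf p: T_{\mathbf p}\ne 0\}\subseteq Z_j$, and $t_j(M)$ is the largest submodule of $M$ lying in $\mathcal T_j$. Convention: $Z_{-1}=\emptyset$ and $t_{-1}(M)=0$ (used when $i=0$). $\operatorname{Ass}(M)$ is the set of primes of the form $\operatorname{ann}_\Gamma(x)$,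 $x\in M$. *)

theory Defs
  imports "HOL-Algebra.Algebra"
begin

(* Ordinals are modelled as elements of an arbitrary well-ordered type 'o
   (class wellorder); the theorem is polymorphic in 'o. *)

definition ord_is_zero :: "'o::wellorder \<Rightarrow> bool" where
  "ord_is_zero j \<longleftrightarrow> (\<forall>k. \<not> k < j)"

definition ord_is_succ :: "'o::wellorder \<Rightarrow> bool" where
  "ord_is_succ j \<longleftrightarrow> (\<exists>k. k < j \<and> (\<forall>l. \<not> (k < l \<and> l < j)))"

definition ord_pred :: "'o::wellorder \<Rightarrow> 'o" where
  "ord_pred j = (THE k. k < j \<and> (\<forall>l. \<not> (k < l \<and> l < j)))"

definition ord_nonlimit :: "'o::wellorder \<Rightarrow> bool" where
  "ord_nonlimit j \<longleftrightarrow> ord_is_zero j \<or> ord_is_succ j"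

definition Spec :: "('a, 'b) ring_scheme \<Rightarrow> 'a set set" where
  "Spec R = {p. primeideal p R}"

definition Specm :: "('a, 'b) ring_scheme \<Rightarrow> 'a set set" where
  "Specm R = {p. maximalideal p R}"

definition Max_incl :: "'a set set \<Rightarrow> 'a set set" where
  "Max_incl S = {p \<in> S. \<forall>q \<in> S. p \<subseteq> q \<longrightarrow> q = p}"

definition Zst :: "('a, 'b) ring_scheme \<Rightarrow> 'o::wellorder \<Rightarrow> 'a set set" where
  "Zst R = wfrec {(k, j). k < j}
     (\<lambda>Z j. if ord_is_zero j then Specm R
            else if ord_is_succ j then Z (ord_pred j) \<union> Max_incl (Spec R - Z (ord_pred j))
            else (\<Union>k \<in> {k. k < j}. Z k))"

definition coheight_is :: "('a, 'b) ring_scheme \<Rightarrow> 'a set \<Rightarrow> 'o::wellorder \<Rightarrow> bool" where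
  "coheight_is R p j \<longleftrightarrow> p \<in> Zst R j \<and> (\<forall>k < j. p \<notin> Zst R k)"

(* Supp(N) = {p. N_p \<noteq> 0}; N_p \<noteq> 0 iff some x/1 \<noteq> 0 in N_p,
   i.e. some x \<in> N is not killed by any s \<notin> p *)
definition Supp :: "('a, 'b) ring_scheme \<Rightarrow> ('a, 'c) module \<Rightarrow> 'c set \<Rightarrow> 'a set set" where
  "Supp R M N = {p \<in> Spec R. \<exists>x \<in> N. \<forall>s \<in> carrier R - p. s \<odot>\<^bsub>M\<^esub> x \<noteq> \<zero>\<^bsub>M\<^esub>}"

definition tors :: "('a, 'b) ring_scheme \<Rightarrow> ('a, 'c) module \<Rightarrow> 'o::wellorder \<Rightarrow> 'c set" where
  "tors R M j = (GREATEST N. submodule N R M \<and> Supp R M N \<subseteq> Zst R j)"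

definition tors_prev :: "('a, 'b) ring_scheme \<Rightarrow> ('a, 'c) module \<Rightarrow> 'o::wellorder \<Rightarrow> 'c set" where
  "tors_prev R M j = (if ord_is_zero j then {\<zero>\<^bsub>M\<^esub>} else tors R M (ord_pred j))"

definition ann :: "('a, 'b) ring_scheme \<Rightarrow> ('a, 'c) module \<Rightarrow> 'c \<Rightarrow> 'a set" where
  "ann R M x = {a \<in> carrier R. a \<odot>\<^bsub>M\<^esub> x = \<zero>\<^bsub>M\<^esub>}"

definition Ass :: "('a, 'b) ring_scheme \<Rightarrow> ('a, 'c) module \<Rightarrow> 'a set set" where
  "Ass R M = {p. primeideal p R \<and> (\<exists>x \<in> carrier M. p = ann R M x)}"

primrec ideal_power :: "('a, 'b) ring_scheme \<Rightarrow> 'a set \<Rightarrow> nat \<Rightarrow> 'a set" where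
  "ideal_power R I 0 = carrier R"
| "ideal_power R I (Suc n) = I \<cdot>\<^bsub>R\<^esub> ideal_power R I n"

primrec ideal_prod_list :: "('a, 'b) ring_scheme \<Rightarrow> ('a set \<times> nat) list \<Rightarrow> 'a set" where
  "ideal_prod_list R [] = carrier R"
| "ideal_prod_list R (pn # ps) = ideal_power R (fst pn) (snd pn) \<cdot>\<^bsub>R\<^esub> ideal_prod_list R ps"

end

theory Submission
  imports Defs
begin


lemma Zst_wf: "wf {(k, j). (k::'o::wellorder) < j}"
  by (rule wf)

lemma pred_props0:
  assumes "ord_is_succ (j::'o::wellorder)"
  shows "ord_pred j < j \<and> (\<forall>l. \<not> (ord_pred j < l \<and> l < j))"
proof -
  let ?P = "\<lambda>k. k < j \<and> (\<forall>l. \<not> (k < l \<and> l < j))"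
  have ex: "\<exists>k. ?P k" using assms unfolding ord_is_succ_def .
  have un: "a = b" if "?P a" "?P b" for a b
  proof (rule ccontr)
    assume "a \<noteq> b"
    then have "a < b \<or> b < a" by (rule linorder_neqE) auto
    then show False using that by blast
  qed
  have "\<exists>!k. ?P k" using ex un by blast
  then have "?P (THE k. ?P k)" by (rule theI')
  then show ?thesis unfolding ord_pred_def .
qed

lemma pred_props:
  assumes "ord_is_succ (j::'o::wellorder)"
  shows "ord_pred j < j" "\<And>l. \<not> (ord_pred j < l \<and> l < j)"
  using pred_props0[OF assms] by auto

lemma Zst_unfold:
  "Zst R (j::'o::wellorder) = (if ord_is_zero j then Specm R
            else if ord_is_succ j then Zst R (ord_pred j) \<union> Max_incl (Spec R - Zst R (ord_pred j))
            else (\<Union>k \<in> {k. k < j}. Zst R k))"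
proof -
  define F :: "('o \<Rightarrow> 'a set set) \<Rightarrow> 'o \<Rightarrow> 'a set set" where "F = (\<lambda>Z j. if ord_is_zero j then Specm R
            else if ord_is_succ j then Z (ord_pred j) \<union> Max_incl (Spec R - Z (ord_pred j))
            else (\<Union>k \<in> {k. k < j}. Z k))"
  have Zd: "Zst R = wfrec {(k, j). k < j} F" unfolding Zst_def F_def by simp
  have e: "Zst R j = F (cut (Zst R) {(k, j). k < j} j) j"
    unfolding Zd by (rule wfrec[OF Zst_wf])
  show ?thesis
  proof (cases "ord_is_zero j")
    case True then show ?thesis using e by (simp add: F_def)
  next
    case nz: False
    show ?thesis
    proof (cases "ord_is_succ j")
      case True
      have "cut (Zst R) {(k, j). k < j} j (ord_pred j) = Zst R (ord_pred j)"
        by (rule cut_apply) (simp add: pred_props(1)[OF True])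
      then show ?thesis using e nz True by (simp add: F_def)
    next
      case False
      have "(\<Union>k \<in> {k. k < j}. cut (Zst R) {(k, j). k < j} j k) = (\<Union>k \<in> {k. k < j}. Zst R k)"
        by (rule SUP_cong) (auto simp: cut_apply)
      then show ?thesis using e nz False by (simp add: F_def)
    qed
  qed
qed


lemma pred_le: "ord_is_succ (j::'o::wellorder) \<Longrightarrow> k < j \<Longrightarrow> k \<le> ord_pred j"
  using pred_props(2)[of j k] by (meson linorder_not_le)

lemma Zst_succ: "\<not> ord_is_zero j \<Longrightarrow> ord_is_succ (j::'o::wellorder) \<Longrightarrow>
   Zst R j = Zst R (ord_pred j) \<union> Max_incl (Spec R - Zst R (ord_pred j))"
  by (subst Zst_unfold) simp

lemma Zst_lim: "\<not> ord_is_zero j \<Longrightarrow> \<not> ord_is_succ (j::'o::wellorder) \<Longrightarrow>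
   Zst R j = (\<Union>k \<in> {k. k < j}. Zst R k)"
  by (subst Zst_unfold) simp

lemma Zst_zero: "ord_is_zero (j::'o::wellorder) \<Longrightarrow> Zst R j = Specm R"
  by (subst Zst_unfold) simp


lemma Zst_mono: "(j::'o::wellorder) \<le> k \<Longrightarrow> Zst R j \<subseteq> Zst R k"
proof (induction k rule: less_induct)
  case (less k)
  show ?case
  proof (cases "j = k")
    case True then show ?thesis by simp
  next
    case False
    then have jk: "j < k" using less.prems by simp
    have nz: "\<not> ord_is_zero k" using jk unfolding ord_is_zero_def by blast
    show ?thesis
    proof (cases "ord_is_succ k")
      case True
      have "Zst R j \<subseteq> Zst R (ord_pred k)"
        using less.IH[OF pred_props(1)[OF True] pred_le[OF True jk]] .
      then show ?thesis using Zst_succ[OF nz True, of R] by blast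
    next
      case False
      then show ?thesis using Zst_lim[OF nz False, of R] jk by blast
    qed
  qed
qed


lemma Zst_spec:
  "p \<in> Zst R (j::'o::wellorder) \<Longrightarrow> primeideal q R \<Longrightarrow> p \<subseteq> q \<Longrightarrow> q \<in> Zst R j"
proof (induction j arbitrary: p rule: less_induct)
  case (less j)
  note pj = less.prems(1) and qp = less.prems(2) and pq = less.prems(3)
  show ?case
  proof (cases "ord_is_zero j")
    case True
    have pm: "maximalideal p R" using pj unfolding Zst_zero[OF True, of R] Specm_def by simp
    have qi: "ideal q R" using qp by (rule primeideal.axioms(1))
    have qc: "q \<subseteq> carrier R" using ideal.Icarr[OF qi] by (rule subsetI)
    have "q = p \<or> q = carrier R"
      by (rule maximalideal.I_maximal[OF pm qi pq qc])
    then have "q = p" using primeideal.I_notcarr[OF qp] by auto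
    then show ?thesis using pj by simp
  next
    case nz: False
    show ?thesis
    proof (cases "ord_is_succ j")
      case True
      note ZS = Zst_succ[OF nz True, of R]
      have lt: "ord_pred j < j" by (rule pred_props(1)[OF True])
      have "p \<in> Zst R (ord_pred j) \<or> p \<in> Max_incl (Spec R - Zst R (ord_pred j))"
        using pj unfolding ZS by simp
      then have "q \<in> Zst R (ord_pred j) \<or> q \<in> Max_incl (Spec R - Zst R (ord_pred j))"
      proof
        assume "p \<in> Zst R (ord_pred j)"
        then have "q \<in> Zst R (ord_pred j)" using less.IH[OF lt _ qp pq] by simp
        then show ?thesis ..
      next
        assume pM: "p \<in> Max_incl (Spec R - Zst R (ord_pred j))"
        show ?thesis
        proof (cases "q \<in> Zst R (ord_pred j)")
          case False
          then have "q \<in> Spec R - Zst R (ord_pred j)" using qp by (simp add: Spec_def)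
          then have "q = p" using pM pq unfolding Max_incl_def by auto
          then show ?thesis using pM by simp
        qed simp
      qed
      then show ?thesis unfolding ZS by simp
    next
      case False
      note ZL = Zst_lim[OF nz False, of R]
      obtain k where k: "k < j" "p \<in> Zst R k" using pj unfolding ZL by auto
      then have "q \<in> Zst R k" using less.IH[OF k(1) k(2) qp pq] by simp
      then show ?thesis unfolding ZL using k(1) by auto
    qed
  qed
qed

definition Zp :: "('a, 'b) ring_scheme \<Rightarrow> 'o::wellorder \<Rightarrow> 'a set set" where
  "Zp R i = (if ord_is_zero i then {} else Zst R (ord_pred i))"

lemma Zp_spec: "p \<in> Zp R i \<Longrightarrow> primeideal q R \<Longrightarrow> p \<subseteq> q \<Longrightarrow> q \<in> Zp R i"
  unfolding Zp_def using Zst_spec by (cases "ord_is_zero i") auto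

lemma coheight_i:
  assumes "ord_nonlimit (i::'o::wellorder)"
  shows "coheight_is R p i \<longleftrightarrow> p \<in> Zst R i \<and> p \<notin> Zp R i"
proof (cases "ord_is_zero i")
  case True
  then show ?thesis unfolding coheight_is_def Zp_def ord_is_zero_def by auto
next
  case False
  then have S: "ord_is_succ i" using assms unfolding ord_nonlimit_def by auto
  have "(\<forall>k<i. p \<notin> Zst R k) \<longleftrightarrow> p \<notin> Zst R (ord_pred i)"
  proof
    assume "\<forall>k<i. p \<notin> Zst R k" then show "p \<notin> Zst R (ord_pred i)" using pred_props(1)[OF S] by blast
  next
    assume a: "p \<notin> Zst R (ord_pred i)"
    show "\<forall>k<i. p \<notin> Zst R k"
    proof (intro allI impI)
      fix k assume "k < i"
      then have "Zst R k \<subseteq> Zst R (ord_pred i)" using Zst_mono pred_le[OF S] by blast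
      then show "p \<notin> Zst R k" using a by blast
    qed
  qed
  then show ?thesis unfolding coheight_is_def Zp_def using False by simp
qed

lemma coheight_lt:
  assumes "ord_nonlimit (i::'o::wellorder)"
  shows "(\<exists>j<i. coheight_is R p j) \<longleftrightarrow> p \<in> Zp R i"
proof (cases "ord_is_zero i")
  case True
  then show ?thesis unfolding Zp_def ord_is_zero_def by auto
next
  case False
  then have S: "ord_is_succ i" using assms unfolding ord_nonlimit_def by auto
  show ?thesis
  proof
    assume "\<exists>j<i. coheight_is R p j"
    then obtain j where "j < i" "p \<in> Zst R j" unfolding coheight_is_def by blast
    then have "p \<in> Zst R (ord_pred i)" using Zst_mono pred_le[OF S] by blast
    then show "p \<in> Zp R i" unfolding Zp_def using False by simp
  next
    assume "p \<in> Zp R i"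
    then have pz: "p \<in> Zst R (ord_pred i)" unfolding Zp_def using False by simp
    define j :: 'o where "j = (LEAST j. p \<in> Zst R j)"
    have j1: "p \<in> Zst R j" unfolding j_def by (rule LeastI[where P="\<lambda>j. p \<in> Zst R j", OF pz])
    have j2: "j \<le> ord_pred i" unfolding j_def by (rule Least_le[where P="\<lambda>j. p \<in> Zst R j", OF pz])
    have j3: "\<forall>k<j. p \<notin> Zst R k" unfolding j_def using not_less_Least by blast
    have "j < i" using j2 pred_props(1)[OF S] by simp
    then show "\<exists>j<i. coheight_is R p j" using j1 j3 unfolding coheight_is_def by blast
  qed
qed




definition Good :: "('a, 'b) ring_scheme \<Rightarrow> ('a, 'c) module \<Rightarrow> 'a set set \<Rightarrow> 'c set" where
  "Good R M S = {x \<in> carrier M. \<forall>p. primeideal p R \<longrightarrow> ann R M x \<subseteq> p \<longrightarrow> p \<in> S}"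

context
  fixes R :: "('a, 'b) ring_scheme" (structure) and M :: "('a, 'c) module"
  assumes mod: "module R M"
begin

interpretation module R M by (rule mod)

lemma rR: "ring R" using mod by (simp add: module_def cring_def)

lemma ann_ideal: assumes x: "x \<in> carrier M" shows "ideal (ann R M x) R"
proof (rule idealI[OF rR])
  show "subgroup (ann R M x) (add_monoid R)"
  proof (rule R.add.subgroupI)
    show "ann R M x \<subseteq> carrier R" unfolding ann_def by auto
    show "ann R M x \<noteq> {}" unfolding ann_def using x by (auto intro!: exI[of _ \<zero>])
    fix a b assume a: "a \<in> ann R M x" and b: "b \<in> ann R M x"
    show "\<ominus> a \<in> ann R M x"
      using a x by (simp add: ann_def smult_l_minus)
    show "a \<oplus> b \<in> ann R M x"
      using a b x by (simp add: ann_def smult_l_distr)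
  qed
  fix a y assume a: "a \<in> ann R M x" and y: "y \<in> carrier R"
  show "y \<otimes> a \<in> ann R M x" using a y x by (simp add: ann_def smult_assoc1)
  show "a \<otimes> y \<in> ann R M x" using a y x by (simp add: ann_def smult_assoc1 R.m_comm[of a y])
qed

lemma smult_commute: "a \<in> carrier R \<Longrightarrow> b \<in> carrier R \<Longrightarrow> x \<in> carrier M \<Longrightarrow>
  a \<odot>\<^bsub>M\<^esub> (b \<odot>\<^bsub>M\<^esub> x) = b \<odot>\<^bsub>M\<^esub> (a \<odot>\<^bsub>M\<^esub> x)"
proof -
  assume a: "a \<in> carrier R" and b: "b \<in> carrier R" and x: "x \<in> carrier M"
  have "a \<odot>\<^bsub>M\<^esub> (b \<odot>\<^bsub>M\<^esub> x) = (a \<otimes> b) \<odot>\<^bsub>M\<^esub> x" using a b x by (rule smult_assoc1[symmetric])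
  also have "\<dots> = (b \<otimes> a) \<odot>\<^bsub>M\<^esub> x" using a b by (simp add: R.m_comm)
  also have "\<dots> = b \<odot>\<^bsub>M\<^esub> (a \<odot>\<^bsub>M\<^esub> x)" using a b x by (simp add: smult_assoc1)
  finally show ?thesis .
qed

lemma ann_zero: "ann R M \<zero>\<^bsub>M\<^esub> = carrier R"
  unfolding ann_def by auto

lemma ann_smult: assumes "a \<in> carrier R" "x \<in> carrier M"
  shows "ann R M x \<subseteq> ann R M (a \<odot>\<^bsub>M\<^esub> x)"
proof
  fix b assume b: "b \<in> ann R M x"
  then have "b \<in> carrier R" "b \<odot>\<^bsub>M\<^esub> x = \<zero>\<^bsub>M\<^esub>" unfolding ann_def by auto
  then have "b \<odot>\<^bsub>M\<^esub> (a \<odot>\<^bsub>M\<^esub> x) = \<zero>\<^bsub>M\<^esub>"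
    using assms by (simp add: smult_commute)
  then show "b \<in> ann R M (a \<odot>\<^bsub>M\<^esub> x)" using \<open>b \<in> carrier R\<close> unfolding ann_def by auto
qed

lemma prime_not_carrier: "primeideal p R \<Longrightarrow> \<not> carrier R \<subseteq> p"
proof
  assume p: "primeideal p R" and c: "carrier R \<subseteq> p"
  have "p \<subseteq> carrier R" using ideal.Icarr[OF primeideal.axioms(1)[OF p]] by (rule subsetI)
  then have "p = carrier R" using c by (rule subset_antisym)
  then show False using primeideal.I_notcarr[OF p] by simp
qed

lemma Supp_iff: assumes "N \<subseteq> carrier M"
  shows "p \<in> Supp R M N \<longleftrightarrow> primeideal p R \<and> (\<exists>x\<in>N. ann R M x \<subseteq> p)"
proof
  assume "p \<in> Supp R M N"
  then obtain x where p: "primeideal p R" and x: "x \<in> N" and h: "\<forall>s \<in> carrier R - p. s \<odot>\<^bsub>M\<^esub> x \<noteq> \<zero>\<^bsub>M\<^esub>"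
    unfolding Supp_def Spec_def by auto
  have "ann R M x \<subseteq> p" using h unfolding ann_def by auto
  then show "primeideal p R \<and> (\<exists>x\<in>N. ann R M x \<subseteq> p)" using p x by auto
next
  assume "primeideal p R \<and> (\<exists>x\<in>N. ann R M x \<subseteq> p)"
  then obtain x where p: "primeideal p R" and x: "x \<in> N" and h: "ann R M x \<subseteq> p" by auto
  have "\<forall>s \<in> carrier R - p. s \<odot>\<^bsub>M\<^esub> x \<noteq> \<zero>\<^bsub>M\<^esub>" using h unfolding ann_def by auto
  then show "p \<in> Supp R M N" using p x unfolding Supp_def Spec_def by auto
qed

lemma Good_submodule: "submodule (Good R M S) R M"
proof (rule submoduleI)
  show "Good R M S \<subseteq> carrier M" unfolding Good_def by auto
  show "\<zero>\<^bsub>M\<^esub> \<in> Good R M S" unfolding Good_def using ann_zero prime_not_carrier by auto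
  have sm: "a \<odot>\<^bsub>M\<^esub> x \<in> Good R M S" if a: "a \<in> carrier R" and x: "x \<in> Good R M S" for a x
    using x a ann_smult[OF a] unfolding Good_def by blast
  then show "\<And>a x. a \<in> carrier R \<Longrightarrow> x \<in> Good R M S \<Longrightarrow> a \<odot>\<^bsub>M\<^esub> x \<in> Good R M S" .
  fix x assume x: "x \<in> Good R M S"
  then have xc: "x \<in> carrier M" unfolding Good_def by auto
  have "\<ominus>\<^bsub>M\<^esub> x = (\<ominus> \<one>) \<odot>\<^bsub>M\<^esub> x" using xc by (simp add: smult_l_minus)
  then show "\<ominus>\<^bsub>M\<^esub> x \<in> Good R M S" using sm[OF _ x, of "\<ominus> \<one>"] by simp
next
  fix x y assume x: "x \<in> Good R M S" and y: "y \<in> Good R M S"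
  then have xc: "x \<in> carrier M" and yc: "y \<in> carrier M" unfolding Good_def by auto
  show "x \<oplus>\<^bsub>M\<^esub> y \<in> Good R M S"
    unfolding Good_def
  proof (intro CollectI conjI allI impI)
    show "x \<oplus>\<^bsub>M\<^esub> y \<in> carrier M" using xc yc by simp
    fix p assume p: "primeideal p R" and sub: "ann R M (x \<oplus>\<^bsub>M\<^esub> y) \<subseteq> p"
    show "p \<in> S"
    proof (rule ccontr)
      assume nS: "p \<notin> S"
      then have "\<not> ann R M x \<subseteq> p" "\<not> ann R M y \<subseteq> p" using x y p unfolding Good_def by auto
      then obtain a b where a: "a \<in> ann R M x" "a \<notin> p" and b: "b \<in> ann R M y" "b \<notin> p" by auto
      have ac: "a \<in> carrier R" and bc: "b \<in> carrier R" and ax: "a \<odot>\<^bsub>M\<^esub> x = \<zero>\<^bsub>M\<^esub>"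
        and bx: "b \<odot>\<^bsub>M\<^esub> y = \<zero>\<^bsub>M\<^esub>" using a b unfolding ann_def by auto
      have "(a \<otimes> b) \<odot>\<^bsub>M\<^esub> (x \<oplus>\<^bsub>M\<^esub> y) = \<zero>\<^bsub>M\<^esub>"
      proof -
        have 1: "(a \<otimes> b) \<odot>\<^bsub>M\<^esub> x = \<zero>\<^bsub>M\<^esub>"
          using ac bc xc ax smult_assoc1[OF ac bc xc] smult_commute[OF ac bc xc] by simp
        have 2: "(a \<otimes> b) \<odot>\<^bsub>M\<^esub> y = \<zero>\<^bsub>M\<^esub>"
          using ac bc yc bx by (simp add: smult_assoc1)
        show ?thesis using 1 2 ac bc xc yc by (simp add: smult_r_distr)
      qed
      then have "a \<otimes> b \<in> p" using sub ac bc unfolding ann_def by auto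
      then show False using primeideal.I_prime[OF p ac bc] a b by auto
    qed
  qed
qed

lemma Greatest_Good: "(GREATEST N. submodule N R M \<and> Supp R M N \<subseteq> S) = Good R M S"
proof (rule Greatest_equality)
  have "Supp R M (Good R M S) \<subseteq> S"
  proof
    fix p assume "p \<in> Supp R M (Good R M S)"
    then obtain x where "primeideal p R" "x \<in> Good R M S" "ann R M x \<subseteq> p"
      using Supp_iff[of "Good R M S"] unfolding Good_def by auto
    then show "p \<in> S" unfolding Good_def by auto
  qed
  then show "submodule (Good R M S) R M \<and> Supp R M (Good R M S) \<subseteq> S" using Good_submodule by auto
next
  fix N assume N: "submodule N R M \<and> Supp R M N \<subseteq> S"
  then have Nc: "N \<subseteq> carrier M" using submoduleE(1) by blast
  show "N \<subseteq> Good R M S"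
  proof
    fix x assume x: "x \<in> N"
    have "p \<in> S" if "primeideal p R" "ann R M x \<subseteq> p" for p
      using Supp_iff[OF Nc, of p] that x N by auto
    then show "x \<in> Good R M S" unfolding Good_def using x Nc by auto
  qed
qed

lemma tors_Good: "tors R M j = Good R M (Zst R j)"
  unfolding tors_def by (rule Greatest_Good)

end




lemma noeth_max:
  assumes "noetherian_ring R" "A \<noteq> {}" "A \<subseteq> {I. ideal I R}"
  shows "\<exists>m\<in>A. \<forall>Y\<in>A. m \<subseteq> Y \<longrightarrow> Y = m"
proof (rule subset_Zorn_nonempty[OF assms(2)])
  fix C assume C: "C \<noteq> {}" "subset.chain A C"
  have "subset.chain {I. ideal I R} C" using C(2) assms(3) unfolding pred_on.chain_def by blast
  then have "\<Union>C \<in> C" using noetherian_ring.ideal_chain_is_trivial[OF assms(1) C(1)] by blast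
  then show "\<Union>C \<in> A" using C(2) unfolding pred_on.chain_def by blast
qed

lemma ideal_power_ideal: "ring R \<Longrightarrow> ideal I R \<Longrightarrow> ideal (ideal_power R I n) R"
  by (induction n) (simp_all add: ring.oneideal ring.ideal_prod_is_ideal)

lemma ideal_prod_list_ideal:
  "ring R \<Longrightarrow> \<forall>pn\<in>set ps. ideal (fst pn) R \<Longrightarrow> ideal (ideal_prod_list R ps) R"
  by (induction ps) (simp_all add: ring.oneideal ring.ideal_prod_is_ideal ideal_power_ideal)

lemma ipl_append:
  assumes "cring R" "\<forall>pn\<in>set A. ideal (fst pn) R" "\<forall>pn\<in>set B. ideal (fst pn) R"
  shows "ideal_prod_list R (A @ B) = ideal_prod_list R A \<cdot>\<^bsub>R\<^esub> ideal_prod_list R B"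
  using assms(2)
proof (induction A)
  case Nil
  have r: "ring R" using assms(1) by (rule cring.axioms(1))
  have iB: "ideal (ideal_prod_list R B) R" using ideal_prod_list_ideal[OF r assms(3)] .
  have "carrier R \<cdot>\<^bsub>R\<^esub> ideal_prod_list R B = ideal_prod_list R B \<cdot>\<^bsub>R\<^esub> carrier R"
    using cring.ideal_prod_commute[OF assms(1) ring.oneideal[OF r] iB] .
  also have "\<dots> = ideal_prod_list R B" using ring.ideal_prod_one[OF r iB] .
  finally show ?case by simp
next
  case (Cons pn A)
  have r: "ring R" using assms(1) by (rule cring.axioms(1))
  have iA: "ideal (ideal_prod_list R A) R" using ideal_prod_list_ideal[OF r] Cons.prems by simp
  have iB: "ideal (ideal_prod_list R B) R" using ideal_prod_list_ideal[OF r assms(3)] .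
  have iP: "ideal (ideal_power R (fst pn) (snd pn)) R" using ideal_power_ideal[OF r] Cons.prems by simp
  have "ideal_prod_list R ((pn # A) @ B) = ideal_power R (fst pn) (snd pn) \<cdot>\<^bsub>R\<^esub> (ideal_prod_list R A \<cdot>\<^bsub>R\<^esub> ideal_prod_list R B)"
    using Cons by simp
  also have "\<dots> = (ideal_power R (fst pn) (snd pn) \<cdot>\<^bsub>R\<^esub> ideal_prod_list R A) \<cdot>\<^bsub>R\<^esub> ideal_prod_list R B"
    using ring.ideal_prod_assoc[OF r iP iA iB] by simp
  finally show ?case by simp
qed

lemma ipl_sub:
  assumes "cring R" "\<forall>pn\<in>set A. ideal (fst pn) R" "\<forall>pn\<in>set B. ideal (fst pn) R"
  shows "ideal_prod_list R (A @ B) \<subseteq> ideal_prod_list R A" "ideal_prod_list R (A @ B) \<subseteq> ideal_prod_list R B"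
proof -
  have r: "ring R" using assms(1) by (rule cring.axioms(1))
  have iA: "ideal (ideal_prod_list R A) R" using ideal_prod_list_ideal[OF r assms(2)] .
  have iB: "ideal (ideal_prod_list R B) R" using ideal_prod_list_ideal[OF r assms(3)] .
  show "ideal_prod_list R (A @ B) \<subseteq> ideal_prod_list R A" "ideal_prod_list R (A @ B) \<subseteq> ideal_prod_list R B"
    unfolding ipl_append[OF assms] using ring.ideal_prod_inter[OF r iA iB] by auto
qed

lemma prime_power:
  assumes "primeideal p R" "ideal q R" "ideal_power R q n \<subseteq> p"
  shows "q \<subseteq> p"
  using assms(3)
proof (induction n)
  case 0
  have "p \<subseteq> carrier R" using ideal.Icarr[OF primeideal.axioms(1)[OF assms(1)]] by (rule subsetI)
  then have "p = carrier R" using 0 by simp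
  then show ?case using primeideal.I_notcarr[OF assms(1)] by simp
next
  case (Suc n)
  have r: "ring R" using primeideal.axioms(2)[OF assms(1)] by (rule cring.axioms(1))
  have "q \<subseteq> p \<or> ideal_power R q n \<subseteq> p"
    using ring.primeideal_divides_ideal_prod[OF r assms(1) assms(2) ideal_power_ideal[OF r assms(2)]] Suc.prems
    by simp
  then show ?case using Suc.IH by blast
qed

lemma prime_prod_list:
  assumes "primeideal p R" "\<forall>pn\<in>set ps. ideal (fst pn) R" "ideal_prod_list R ps \<subseteq> p"
  shows "\<exists>pn\<in>set ps. fst pn \<subseteq> p"
  using assms(2,3)
proof (induction ps)
  case Nil
  have "p \<subseteq> carrier R" using ideal.Icarr[OF primeideal.axioms(1)[OF assms(1)]] by (rule subsetI)
  then have "p = carrier R" using Nil by simp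
  then show ?case using primeideal.I_notcarr[OF assms(1)] by simp
next
  case (Cons pn ps)
  have r: "ring R" using primeideal.axioms(2)[OF assms(1)] by (rule cring.axioms(1))
  have iq: "ideal (fst pn) R" using Cons.prems by simp
  have "ideal_power R (fst pn) (snd pn) \<subseteq> p \<or> ideal_prod_list R ps \<subseteq> p"
    using ring.primeideal_divides_ideal_prod[OF r assms(1) ideal_power_ideal[OF r iq]
        ideal_prod_list_ideal[OF r]] Cons.prems by simp
  then show ?case
  proof
    assume "ideal_power R (fst pn) (snd pn) \<subseteq> p"
    then show ?thesis using prime_power[OF assms(1) iq] by auto
  next
    assume "ideal_prod_list R ps \<subseteq> p"
    then show ?thesis using Cons by auto
  qed
qed




context
  fixes R :: "('a, 'b) ring_scheme" (structure) and M :: "('a, 'c) module"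
  assumes mod: "module R M" and noeth: "noetherian_ring R"
begin

interpretation module R M by (rule mod)

lemma cR: "cring R" using mod by (simp add: module_def)
lemma rR': "ring R" using cR by (rule cring.axioms(1))

lemma exists_ass:
  assumes x: "x \<in> carrier M" "x \<noteq> \<zero>\<^bsub>M\<^esub>"
  shows "\<exists>r\<in>carrier R. r \<odot>\<^bsub>M\<^esub> x \<noteq> \<zero>\<^bsub>M\<^esub> \<and> primeideal (ann R M (r \<odot>\<^bsub>M\<^esub> x)) R"
proof -
  let ?A = "{ann R M (r \<odot>\<^bsub>M\<^esub> x) | r. r \<in> carrier R \<and> r \<odot>\<^bsub>M\<^esub> x \<noteq> \<zero>\<^bsub>M\<^esub>}"
  have ne: "?A \<noteq> {}" using x by (auto intro!: exI[of _ \<one>])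
  have sub: "?A \<subseteq> {I. ideal I R}" using ann_ideal[OF mod] x by auto
  obtain m where m: "m \<in> ?A" "\<forall>Y\<in>?A. m \<subseteq> Y \<longrightarrow> Y = m"
    using noeth_max[OF noeth ne sub] by blast
  then obtain r where r: "r \<in> carrier R" "r \<odot>\<^bsub>M\<^esub> x \<noteq> \<zero>\<^bsub>M\<^esub>" "m = ann R M (r \<odot>\<^bsub>M\<^esub> x)" by auto
  define y where "y = r \<odot>\<^bsub>M\<^esub> x"
  have y: "y \<in> carrier M" "y \<noteq> \<zero>\<^bsub>M\<^esub>" using r x unfolding y_def by auto
  have "primeideal m R"
  proof (rule primeidealI)
    show "ideal m R" using ann_ideal[OF mod y(1)] r(3) unfolding y_def by simp
    show "cring R" by (rule cR)
    have "\<one> \<notin> m" using y r(3) unfolding ann_def y_def by auto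
    then show "carrier R \<noteq> m" by auto
    fix a b assume a: "a \<in> carrier R" and b: "b \<in> carrier R" and ab: "a \<otimes> b \<in> m"
    show "a \<in> m \<or> b \<in> m"
    proof (cases "a \<in> m")
      case False
      then have ay: "a \<odot>\<^bsub>M\<^esub> y \<noteq> \<zero>\<^bsub>M\<^esub>" using a r(3) unfolding ann_def y_def by auto
      have eq: "a \<odot>\<^bsub>M\<^esub> y = (a \<otimes> r) \<odot>\<^bsub>M\<^esub> x" unfolding y_def using a r(1) x(1) by (simp add: smult_assoc1)
      have inA: "ann R M (a \<odot>\<^bsub>M\<^esub> y) \<in> ?A" using ay eq a r(1) by (auto intro!: exI[of _ "a \<otimes> r"])
      have "m \<subseteq> ann R M (a \<odot>\<^bsub>M\<^esub> y)" using ann_smult[OF mod a y(1)] r(3) unfolding y_def by simp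
      then have e: "ann R M (a \<odot>\<^bsub>M\<^esub> y) = m" using m(2) inA by blast
      have "(a \<otimes> b) \<odot>\<^bsub>M\<^esub> y = \<zero>\<^bsub>M\<^esub>" using ab r(3) unfolding ann_def y_def by auto
      then have "b \<odot>\<^bsub>M\<^esub> (a \<odot>\<^bsub>M\<^esub> y) = \<zero>\<^bsub>M\<^esub>"
        using smult_assoc1[OF a b y(1)] smult_commute[OF mod a b y(1)] by simp
      then have "b \<in> ann R M (a \<odot>\<^bsub>M\<^esub> y)" using b unfolding ann_def by auto
      then show ?thesis using e by simp
    qed simp
  qed
  then show ?thesis using r by auto
qed


lemma ass_to_prod:
  assumes H: "\<forall>p\<in>Ass R M. p \<in> Q" and y: "y \<in> carrier M"
  shows "\<exists>ps. (\<forall>(p, n) \<in> set ps. primeideal p R \<and> p \<in> Q \<and> n > 0) \<and>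
               (\<forall>a \<in> ideal_prod_list R ps. a \<odot>\<^bsub>M\<^esub> y = \<zero>\<^bsub>M\<^esub>)"
proof -
  define okL where "okL = (\<lambda>ps::('a set \<times> nat) list. \<forall>(p, n) \<in> set ps. primeideal p R \<and> p \<in> Q \<and> n > 0)"
  define kills where "kills = (\<lambda>ps z. \<forall>a \<in> ideal_prod_list R ps. a \<odot>\<^bsub>M\<^esub> z = \<zero>\<^bsub>M\<^esub>)"
  define succ where "succ = (\<lambda>z. \<exists>ps. okL ps \<and> kills ps z)"
  have okI: "\<forall>pn\<in>set ps. ideal (fst pn) R" if "okL ps" for ps
  proof
    fix pn assume "pn \<in> set ps"
    then have "primeideal (fst pn) R" using that unfolding okL_def by (cases pn) auto
    then show "ideal (fst pn) R" by (rule primeideal.axioms(1))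
  qed
  have okApp: "okL (A @ B)" if "okL A" "okL B" for A B
    using that unfolding okL_def by auto
  have "succ z" if z: "z \<in> carrier M" for z
  proof (rule ccontr)
    assume nz: "\<not> succ z"
    let ?F = "{ann R M w | w. w \<in> carrier M \<and> \<not> succ w}"
    have ne: "?F \<noteq> {}" using z nz by auto
    have sub: "?F \<subseteq> {I. ideal I R}" using ann_ideal[OF mod] by auto
    obtain m where m: "m \<in> ?F" "\<forall>Y\<in>?F. m \<subseteq> Y \<longrightarrow> Y = m"
      using noeth_max[OF noeth ne sub] by blast
    then obtain y0 where y0: "y0 \<in> carrier M" "\<not> succ y0" "m = ann R M y0" by auto
    have key: "succ w" if "w \<in> carrier M" "ann R M y0 \<subseteq> ann R M w" "ann R M w \<noteq> ann R M y0" for w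
      using m(2) y0(3) that by blast
    have s0: "succ \<zero>\<^bsub>M\<^esub>"
      unfolding succ_def okL_def kills_def by (auto intro!: exI[of _ "[]"])
    then have y0nz: "y0 \<noteq> \<zero>\<^bsub>M\<^esub>" using y0(2) by auto
    have idl: "ideal (ann R M y0) R" using ann_ideal[OF mod y0(1)] .
    have "\<one> \<notin> ann R M y0" using y0(1) y0nz unfolding ann_def by auto
    then have ncar: "carrier R \<noteq> ann R M y0" by auto
    show False
    proof (cases "primeideal (ann R M y0) R")
      case True
      then have "ann R M y0 \<in> Q" using H y0(1) unfolding Ass_def by auto
      then have ok: "okL [(ann R M y0, 1)]" using True unfolding okL_def by auto
      have "ideal_prod_list R [(ann R M y0, 1)] = ann R M y0"
        using ring.ideal_prod_one[OF rR' idl] ring.ideal_prod_one[OF rR' idl] by simp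
      then have "kills [(ann R M y0, 1)] y0" unfolding kills_def ann_def by auto
      then show False using ok y0(2) unfolding succ_def by blast
    next
      case False
      then obtain a b where a: "a \<in> carrier R" and b: "b \<in> carrier R" and ab: "a \<otimes> b \<in> ann R M y0"
        and an: "a \<notin> ann R M y0" and bn: "b \<notin> ann R M y0"
        using primeidealI[OF idl cR ncar] by blast
      have ay: "a \<odot>\<^bsub>M\<^esub> y0 \<in> carrier M" using a y0(1) by simp
      have "(a \<otimes> b) \<odot>\<^bsub>M\<^esub> y0 = \<zero>\<^bsub>M\<^esub>" using ab unfolding ann_def by auto
      then have "b \<odot>\<^bsub>M\<^esub> (a \<odot>\<^bsub>M\<^esub> y0) = \<zero>\<^bsub>M\<^esub>"
        using smult_assoc1[OF a b y0(1)] smult_commute[OF mod a b y0(1)] by simp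
      then have "b \<in> ann R M (a \<odot>\<^bsub>M\<^esub> y0)" using b unfolding ann_def by auto
      then have "succ (a \<odot>\<^bsub>M\<^esub> y0)"
        using key[OF ay ann_smult[OF mod a y0(1)]] bn by blast
      then obtain L1 where L1: "okL L1" "kills L1 (a \<odot>\<^bsub>M\<^esub> y0)" unfolding succ_def by blast
      define J1 where "J1 = ideal_prod_list R L1"
      have iJ1: "ideal J1 R" unfolding J1_def using ideal_prod_list_ideal[OF rR' okI[OF L1(1)]] .
      obtain C where C: "C \<subseteq> carrier R" "finite C" "J1 = Idl C"
        using noetherian_ring.finetely_gen[OF noeth iJ1] by blast
      have CJ: "C \<subseteq> J1" using ring.genideal_self[OF rR' C(1)] C(3) by simp
      have sc: "succ (c \<odot>\<^bsub>M\<^esub> y0)" if c: "c \<in> C" for c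
      proof -
        have cc: "c \<in> carrier R" using c C(1) by auto
        have cy: "c \<odot>\<^bsub>M\<^esub> y0 \<in> carrier M" using cc y0(1) by simp
        have "c \<odot>\<^bsub>M\<^esub> (a \<odot>\<^bsub>M\<^esub> y0) = \<zero>\<^bsub>M\<^esub>" using L1(2) c CJ unfolding kills_def J1_def by auto
        then have "a \<odot>\<^bsub>M\<^esub> (c \<odot>\<^bsub>M\<^esub> y0) = \<zero>\<^bsub>M\<^esub>" using smult_commute[OF mod a cc y0(1)] by simp
        then have "a \<in> ann R M (c \<odot>\<^bsub>M\<^esub> y0)" using a unfolding ann_def by auto
        then show ?thesis using key[OF cy ann_smult[OF mod cc y0(1)]] an by blast
      qed
      have comb: "\<exists>L. okL L \<and> (\<forall>c\<in>D. kills L (c \<odot>\<^bsub>M\<^esub> y0))" if "finite D" "D \<subseteq> C" for D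
        using that
      proof (induction D rule: finite_induct)
        case empty
        have "okL []" unfolding okL_def by simp
        then show ?case by blast
      next
        case (insert c D)
        then obtain L' where L': "okL L'" "\<forall>c\<in>D. kills L' (c \<odot>\<^bsub>M\<^esub> y0)" by auto
        obtain Lc where Lc: "okL Lc" "kills Lc (c \<odot>\<^bsub>M\<^esub> y0)" using sc insert.prems unfolding succ_def by blast
        have s1: "ideal_prod_list R (L' @ Lc) \<subseteq> ideal_prod_list R L'"
          and s2: "ideal_prod_list R (L' @ Lc) \<subseteq> ideal_prod_list R Lc"
          using ipl_sub[OF cR okI[OF L'(1)] okI[OF Lc(1)]] by auto
        have "\<forall>c'\<in>insert c D. kills (L' @ Lc) (c' \<odot>\<^bsub>M\<^esub> y0)"
          using L'(2) Lc(2) s1 s2 unfolding kills_def by blast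
        then show ?case using okApp[OF L'(1) Lc(1)] by blast
      qed
      obtain Lall where La: "okL Lall" "\<forall>c\<in>C. kills Lall (c \<odot>\<^bsub>M\<^esub> y0)"
        using comb[OF C(2) order_refl] by blast
      define P where "P = ideal_prod_list R Lall"
      have iP: "ideal P R" unfolding P_def using ideal_prod_list_ideal[OF rR' okI[OF La(1)]] .
      have prodsub: "P \<cdot> J1 \<subseteq> ann R M y0"
      proof
        fix s assume "s \<in> P \<cdot> J1"
        then show "s \<in> ann R M y0"
        proof (induct s rule: ideal_prod.induct)
          case (prod pi c')
          have pic: "pi \<in> carrier R" using prod(1) ideal.Icarr[OF iP] by blast
          have c'c: "c' \<in> carrier R" using prod(2) ideal.Icarr[OF iJ1] by blast
          have piy: "pi \<odot>\<^bsub>M\<^esub> y0 \<in> carrier M" using pic y0(1) by simp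
          have "C \<subseteq> ann R M (pi \<odot>\<^bsub>M\<^esub> y0)"
          proof
            fix c assume c: "c \<in> C"
            have cc: "c \<in> carrier R" using c C(1) by auto
            have "pi \<odot>\<^bsub>M\<^esub> (c \<odot>\<^bsub>M\<^esub> y0) = \<zero>\<^bsub>M\<^esub>" using La(2) c prod(1) unfolding kills_def P_def by auto
            then have "c \<odot>\<^bsub>M\<^esub> (pi \<odot>\<^bsub>M\<^esub> y0) = \<zero>\<^bsub>M\<^esub>" using smult_commute[OF mod pic cc y0(1)] by simp
            then show "c \<in> ann R M (pi \<odot>\<^bsub>M\<^esub> y0)" using cc unfolding ann_def by auto
          qed
          then have "J1 \<subseteq> ann R M (pi \<odot>\<^bsub>M\<^esub> y0)"
            using ring.genideal_minimal[OF rR' ann_ideal[OF mod piy]] C(3) by simp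
          then have "c' \<odot>\<^bsub>M\<^esub> (pi \<odot>\<^bsub>M\<^esub> y0) = \<zero>\<^bsub>M\<^esub>" using prod(2) unfolding ann_def by auto
          then have "(pi \<otimes> c') \<odot>\<^bsub>M\<^esub> y0 = \<zero>\<^bsub>M\<^esub>"
            using smult_assoc1[OF pic c'c y0(1)] smult_commute[OF mod pic c'c y0(1)] by simp
          then show ?case using pic c'c unfolding ann_def by auto
        next
          case (sum s1 s2)
          then show ?case using additive_subgroup.a_closed[OF ideal.axioms(1)[OF idl]] by blast
        qed
      qed
      have okF: "okL (Lall @ L1)" using okApp[OF La(1) L1(1)] .
      have "ideal_prod_list R (Lall @ L1) = P \<cdot> J1"
        unfolding P_def J1_def using ipl_append[OF cR okI[OF La(1)] okI[OF L1(1)]] .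
      then have "kills (Lall @ L1) y0" using prodsub unfolding kills_def ann_def by auto
      then show False using okF y0(2) unfolding succ_def by blast
    qed
  qed
  then show ?thesis using y unfolding succ_def okL_def kills_def by blast
qed

end



theorem corollary2p6:
  fixes R :: "('a, 'b) ring_scheme" and M :: "('a, 'c) module" and i :: "'o::wellorder"
  assumes "cring R" and "noetherian_ring R" and "module R M"
    and "carrier M \<noteq> {\<zero>\<^bsub>M\<^esub>}"
    and "ord_nonlimit i"
  shows "((tors R M i = carrier M \<and> tors_prev R M i = {\<zero>\<^bsub>M\<^esub>})
          \<longleftrightarrow>
          ((\<forall>x \<in> carrier M. \<exists>ps :: ('a set \<times> nat) list.
               (\<forall>(p, n) \<in> set ps. primeideal p R \<and> coheight_is R p i \<and> n > 0) \<and>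
               (\<forall>a \<in> ideal_prod_list R ps. a \<odot>\<^bsub>M\<^esub> x = \<zero>\<^bsub>M\<^esub>)) \<and>
           (\<forall>p x. primeideal p R \<and> (\<exists>j < i. coheight_is R p j) \<and> x \<in> carrier M \<and>
               (\<forall>a \<in> p. a \<odot>\<^bsub>M\<^esub> x = \<zero>\<^bsub>M\<^esub>) \<longrightarrow> x = \<zero>\<^bsub>M\<^esub>)))
       \<and> ((tors R M i = carrier M \<and> tors_prev R M i = {\<zero>\<^bsub>M\<^esub>})
          \<longleftrightarrow> (\<forall>p \<in> Ass R M. coheight_is R p i))"
proof -
  note mod = assms(3) and noeth = assms(2) and nl = assms(5)
  interpret module R M by (rule mod)
  have rr: "ring R" using assms(1) by (rule cring.axioms(1))
  define V where "V = (\<lambda>S x. \<forall>p. primeideal p R \<longrightarrow> ann R M x \<subseteq> p \<longrightarrow> p \<in> S)"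
  have GoodV: "Good R M S = {x \<in> carrier M. V S x}" for S unfolding Good_def V_def by simp
  have T1: "tors R M i = carrier M \<longleftrightarrow> (\<forall>x\<in>carrier M. V (Zst R i) x)"
    unfolding tors_Good[OF mod] GoodV by auto
  have T2: "tors_prev R M i = {\<zero>\<^bsub>M\<^esub>} \<longleftrightarrow> (\<forall>x\<in>carrier M. V (Zp R i) x \<longrightarrow> x = \<zero>\<^bsub>M\<^esub>)"
  proof (cases "ord_is_zero i")
    case True
    have "x = \<zero>\<^bsub>M\<^esub>" if x: "x \<in> carrier M" "V (Zp R i) x" for x
    proof (rule ccontr)
      assume "x \<noteq> \<zero>\<^bsub>M\<^esub>"
      then obtain r where r: "r \<in> carrier R" "primeideal (ann R M (r \<odot>\<^bsub>M\<^esub> x)) R"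
        using exists_ass[OF mod noeth x(1)] by blast
      then have "ann R M (r \<odot>\<^bsub>M\<^esub> x) \<in> Zp R i"
        using x(2) ann_smult[OF mod r(1) x(1)] unfolding V_def by blast
      then show False using True unfolding Zp_def by simp
    qed
    then show ?thesis using True unfolding tors_prev_def by auto
  next
    case False
    have z: "\<zero>\<^bsub>M\<^esub> \<in> Good R M (Zp R i)"
      using submodule.axioms(1)[OF Good_submodule[OF mod]] subgroup.one_closed by fastforce
    have "tors_prev R M i = Good R M (Zp R i)"
      unfolding tors_prev_def Zp_def using False tors_Good[OF mod] by simp
    then show ?thesis using z unfolding GoodV by auto
  qed
  let ?A = "tors R M i = carrier M \<and> tors_prev R M i = {\<zero>\<^bsub>M\<^esub>}"
  let ?B1 = "\<forall>x \<in> carrier M. \<exists>ps :: ('a set \<times> nat) list.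
               (\<forall>(p, n) \<in> set ps. primeideal p R \<and> coheight_is R p i \<and> n > 0) \<and>
               (\<forall>a \<in> ideal_prod_list R ps. a \<odot>\<^bsub>M\<^esub> x = \<zero>\<^bsub>M\<^esub>)"
  let ?B2 = "\<forall>p x. primeideal p R \<and> (\<exists>j < i. coheight_is R p j) \<and> x \<in> carrier M \<and>
               (\<forall>a \<in> p. a \<odot>\<^bsub>M\<^esub> x = \<zero>\<^bsub>M\<^esub>) \<longrightarrow> x = \<zero>\<^bsub>M\<^esub>"
  let ?C = "\<forall>p \<in> Ass R M. coheight_is R p i"
  have AC: "?C" if A: ?A
  proof
    fix p assume "p \<in> Ass R M"
    then obtain x where p: "primeideal p R" and x: "x \<in> carrier M" and px: "p = ann R M x"
      unfolding Ass_def by auto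
    have pZ: "p \<in> Zst R i" using A T1 x p px unfolding V_def by blast
    have "p \<notin> Zp R i"
    proof
      assume "p \<in> Zp R i"
      then have "V (Zp R i) x" unfolding V_def using Zp_spec px by blast
      then have "x = \<zero>\<^bsub>M\<^esub>" using A T2 x by blast
      then have "p = carrier R" using px ann_zero[OF mod] by simp
      then show False using prime_not_carrier[OF mod p] by simp
    qed
    then show "coheight_is R p i" using coheight_i[OF nl, of R p] pZ by blast
  qed
  have CB: "?B1 \<and> ?B2" if C: ?C
  proof
    show ?B1
    proof
      fix x assume x: "x \<in> carrier M"
      have H: "\<forall>p\<in>Ass R M. p \<in> {p. coheight_is R p i}" using C by simp
      show "\<exists>ps :: ('a set \<times> nat) list.
               (\<forall>(p, n) \<in> set ps. primeideal p R \<and> coheight_is R p i \<and> n > 0) \<and>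
               (\<forall>a \<in> ideal_prod_list R ps. a \<odot>\<^bsub>M\<^esub> x = \<zero>\<^bsub>M\<^esub>)"
        using ass_to_prod[OF mod noeth H x] by simp
    qed
    show ?B2
    proof (intro allI impI)
      fix p x assume h: "primeideal p R \<and> (\<exists>j < i. coheight_is R p j) \<and> x \<in> carrier M \<and>
               (\<forall>a \<in> p. a \<odot>\<^bsub>M\<^esub> x = \<zero>\<^bsub>M\<^esub>)"
      then have p: "primeideal p R" and pZ: "p \<in> Zp R i" and x: "x \<in> carrier M"
        and px: "\<forall>a \<in> p. a \<odot>\<^bsub>M\<^esub> x = \<zero>\<^bsub>M\<^esub>" using coheight_lt[OF nl] by auto
      show "x = \<zero>\<^bsub>M\<^esub>"
      proof (rule ccontr)
        assume "x \<noteq> \<zero>\<^bsub>M\<^esub>"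
        then obtain r where r: "r \<in> carrier R" "primeideal (ann R M (r \<odot>\<^bsub>M\<^esub> x)) R"
          using exists_ass[OF mod noeth x] by blast
        have pc: "p \<subseteq> carrier R" using ideal.Icarr[OF primeideal.axioms(1)[OF p]] by blast
        have "p \<subseteq> ann R M x" using px pc unfolding ann_def by auto
        then have sub: "p \<subseteq> ann R M (r \<odot>\<^bsub>M\<^esub> x)" using ann_smult[OF mod r(1) x] by blast
        have q: "ann R M (r \<odot>\<^bsub>M\<^esub> x) \<in> Zp R i" using Zp_spec[OF pZ r(2) sub] .
        have "ann R M (r \<odot>\<^bsub>M\<^esub> x) \<in> Ass R M" using r x unfolding Ass_def by auto
        then have "coheight_is R (ann R M (r \<odot>\<^bsub>M\<^esub> x)) i" using C by blast
        then show False using q coheight_i[OF nl, of R "ann R M (r \<odot>\<^bsub>M\<^esub> x)"] by blast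
      qed
    qed
  qed
  have BA: ?A if B1: ?B1 and B2: ?B2
  proof
    have "V (Zst R i) x" if x: "x \<in> carrier M" for x
      unfolding V_def
    proof (intro allI impI)
      fix p assume p: "primeideal p R" and sub: "ann R M x \<subseteq> p"
      obtain ps :: "('a set \<times> nat) list" where ps: "\<forall>(p, n) \<in> set ps. primeideal p R \<and> coheight_is R p i \<and> n > 0"
        and k: "\<forall>a \<in> ideal_prod_list R ps. a \<odot>\<^bsub>M\<^esub> x = \<zero>\<^bsub>M\<^esub>" using B1 x by blast
      have idl: "\<forall>pn\<in>set ps. ideal (fst pn) R"
      proof
        fix pn assume "pn \<in> set ps"
        then have "primeideal (fst pn) R" using ps by (cases pn) auto
        then show "ideal (fst pn) R" by (rule primeideal.axioms(1))
      qed
      have "ideal_prod_list R ps \<subseteq> carrier R"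
        using ideal.Icarr[OF ideal_prod_list_ideal[OF rr idl]] by blast
      then have "ideal_prod_list R ps \<subseteq> ann R M x" using k unfolding ann_def by auto
      then obtain pn where pn: "pn \<in> set ps" "fst pn \<subseteq> p"
        using prime_prod_list[OF p idl] sub by blast
      have "coheight_is R (fst pn) i" using ps pn(1) by (cases pn) auto
      then have "fst pn \<in> Zst R i" unfolding coheight_is_def by simp
      then show "p \<in> Zst R i" using Zst_spec[OF _ p pn(2)] by blast
    qed
    then show "tors R M i = carrier M" using T1 by blast
    have "x = \<zero>\<^bsub>M\<^esub>" if x: "x \<in> carrier M" and v: "V (Zp R i) x" for x
    proof (rule ccontr)
      assume "x \<noteq> \<zero>\<^bsub>M\<^esub>"
      then obtain r where r: "r \<in> carrier R" "r \<odot>\<^bsub>M\<^esub> x \<noteq> \<zero>\<^bsub>M\<^esub>" "primeideal (ann R M (r \<odot>\<^bsub>M\<^esub> x)) R"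
        using exists_ass[OF mod noeth x] by blast
      have "ann R M (r \<odot>\<^bsub>M\<^esub> x) \<in> Zp R i"
        using v r(3) ann_smult[OF mod r(1) x] unfolding V_def by blast
      then have "\<exists>j<i. coheight_is R (ann R M (r \<odot>\<^bsub>M\<^esub> x)) j" using coheight_lt[OF nl, of R "ann R M (r \<odot>\<^bsub>M\<^esub> x)"] by blast
      moreover have "\<forall>a \<in> ann R M (r \<odot>\<^bsub>M\<^esub> x). a \<odot>\<^bsub>M\<^esub> (r \<odot>\<^bsub>M\<^esub> x) = \<zero>\<^bsub>M\<^esub>" unfolding ann_def by auto
      moreover have "r \<odot>\<^bsub>M\<^esub> x \<in> carrier M" using r(1) x by simp
      ultimately have "r \<odot>\<^bsub>M\<^esub> x = \<zero>\<^bsub>M\<^esub>" using B2 r(3) by blast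
      then show False using r(2) by simp
    qed
    then show "tors_prev R M i = {\<zero>\<^bsub>M\<^esub>}" using T2 by blast
  qed
  show ?thesis using AC CB BA by blast
qed


end
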